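(* Let $a^1,\dots,a^N\in\mathbb{R}^{V_+}$ and $h\in\mathbb{R}$, and let $$\mathcal{H}=\Big\{(\theta,y)\in\mathbb{R}^{V_+}_{\ge0}\times\mathbb{R}^{[N]\times V_+}_{\ge0}:\ \sum_{\xi\in[N]}(a^\xi)^\top y^\xi\ge h,\ \ \theta_v\ge\sum_{\xi\in[N]}p_\xi w_vy^\xi_v\ \forall v\in V_+\Big\}.$$ Then: if there exist $v\in V_+$ and $\xi\in[N]$ with $w_v=0$ and $a^\xi_v>0$, the projection of $\mathcal{H}$ onto $\theta$ is $\mathbb{R}^{V_+}_{\ge0}$; otherwise the projection of $\mathcal{H}$ onto $\theta$ equals $$\Big\{\theta\in\mathbb{R}^{V_+}_{\ge0}:\ \sum_{v\in V_+:\,w_v>0}\Big(\max_{\xi\in[N]}\frac{a^\xi_v}{p_\xi w_v}\Big)^+\theta_v\ge h\Big\}.$$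
   Context: $V_+$ is a finite set (customers); $N$ is a positive integer; $p_\xi\in[0,1]$ for $\xi\in[N]$ with $\sum_\xi p_\xi=1$ are scenario probabilities; $w\in\mathbb{Q}^{V_+}_{\ge0}$ is a fixed weight vector. Vectors $y\in\mathbb{R}^{[N]\times V_+}$ have entries $y^\xi_v$, and $y^\xi\in\mathbb{R}^{V_+}$ is the restriction to scenario $\xi$. $(a)^+=\max\{a,0\}$. *)

theory Defs
  imports "HOL-Library.FuncSet" Complex_Main
begin

definition setH ::
  "'v set \<Rightarrow> nat \<Rightarrow> (nat \<Rightarrow> real) \<Rightarrow> ('v \<Rightarrow> real) \<Rightarrow> (nat \<Rightarrow> 'v \<Rightarrow> real) \<Rightarrow> real
   \<Rightarrow> (('v \<Rightarrow> real) \<times> (nat \<times> 'v \<Rightarrow> real)) set" where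
  "setH V N p w a h =
     {(\<theta>, y). \<theta> \<in> V \<rightarrow>\<^sub>E {0..} \<and> y \<in> ({1..N} \<times> V) \<rightarrow>\<^sub>E {0..} \<and>
        (\<Sum>\<xi>\<in>{1..N}. \<Sum>v\<in>V. a \<xi> v * y (\<xi>, v)) \<ge> h \<and>
        (\<forall>v\<in>V. \<theta> v \<ge> (\<Sum>\<xi>\<in>{1..N}. p \<xi> * w v * y (\<xi>, v)))}"

definition proj_theta :: "(('v \<Rightarrow> real) \<times> (nat \<times> 'v \<Rightarrow> real)) set \<Rightarrow> ('v \<Rightarrow> real) set" where
  "proj_theta S = fst ` S"

end

theory Submission
  imports Defs
begin

lemma part1:
  fixes V :: "'v set" and N :: nat and p :: "nat \<Rightarrow> real" and w :: "'v \<Rightarrow> real"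
    and a :: "nat \<Rightarrow> 'v \<Rightarrow> real" and h :: real
  assumes fin: "finite V" and v0: "v0 \<in> V" and x0: "x0 \<in> {1..N}" and w0: "w v0 = 0"
    and a0: "a x0 v0 > 0"
  shows "proj_theta (setH V N p w a h) = V \<rightarrow>\<^sub>E {0..}"
proof
  show "proj_theta (setH V N p w a h) \<subseteq> V \<rightarrow>\<^sub>E {0..}"
    unfolding proj_theta_def setH_def by auto
next
  show "V \<rightarrow>\<^sub>E {0..} \<subseteq> proj_theta (setH V N p w a h)"
  proof
    fix \<theta> assume th: "\<theta> \<in> V \<rightarrow>\<^sub>E ({0..}::real set)"
    define M where "M = max 0 h / a x0 v0"
    have M0: "M \<ge> 0" using a0 by (simp add: M_def)
    define y where "y = restrict (\<lambda>(\<xi>,v). if \<xi> = x0 then (if v = v0 then M else 0) else 0) ({1..N} \<times> V)"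
    have y: "y \<in> ({1..N} \<times> V) \<rightarrow>\<^sub>E {0..}" using M0 by (auto simp: y_def)
    have "(\<Sum>\<xi>\<in>{1..N}. \<Sum>v\<in>V. a \<xi> v * y (\<xi>, v)) =
          (\<Sum>\<xi>\<in>{1..N}. if \<xi> = x0 then (\<Sum>v\<in>V. if v = v0 then a x0 v0 * M else 0) else 0)"
      by (rule sum.cong[OF refl]) (auto simp: y_def intro!: sum.cong)
    also have "\<dots> = a x0 v0 * M" using x0 v0 fin by simp
    also have "\<dots> = max 0 h" using a0 by (simp add: M_def)
    finally have s: "(\<Sum>\<xi>\<in>{1..N}. \<Sum>v\<in>V. a \<xi> v * y (\<xi>, v)) \<ge> h" by simp
    have c: "\<forall>v\<in>V. \<theta> v \<ge> (\<Sum>\<xi>\<in>{1..N}. p \<xi> * w v * y (\<xi>, v))"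
    proof
      fix v assume v: "v \<in> V"
      have "(\<Sum>\<xi>\<in>{1..N}. p \<xi> * w v * y (\<xi>, v)) = 0"
        using v w0 by (auto simp: y_def intro!: sum.neutral)
      then show "\<theta> v \<ge> (\<Sum>\<xi>\<in>{1..N}. p \<xi> * w v * y (\<xi>, v))" using th v by auto
    qed
    have "(\<theta>, y) \<in> setH V N p w a h" unfolding setH_def using th y s c by auto
    then show "\<theta> \<in> proj_theta (setH V N p w a h)" unfolding proj_theta_def by force
  qed
qed


lemma part2:
  fixes V :: "'v set" and N :: nat and p :: "nat \<Rightarrow> real" and w :: "'v \<Rightarrow> real"
    and a :: "nat \<Rightarrow> 'v \<Rightarrow> real" and h :: real
  assumes fin: "finite V" and N: "N > 0"
    and pp: "\<forall>\<xi>\<in>{1..N}. 0 < p \<xi>"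
    and wp: "\<forall>v\<in>V. w v \<ge> 0"
    and no: "\<not> (\<exists>v\<in>V. \<exists>\<xi>\<in>{1..N}. w v = 0 \<and> a \<xi> v > 0)"
  shows "proj_theta (setH V N p w a h) =
              {\<theta> \<in> V \<rightarrow>\<^sub>E {0..}.
                 (\<Sum>v\<in>{v\<in>V. w v > 0}.
                    max (Max ((\<lambda>\<xi>. a \<xi> v / (p \<xi> * w v)) ` {1..N})) 0 * \<theta> v) \<ge> h}"
    (is "_ = {\<theta> \<in> _. (\<Sum>v\<in>_. max (?M v) 0 * \<theta> v) \<ge> h}")
proof -
  have ne: "{1..N} \<noteq> {}" using N by auto
  have Mge: "a \<xi> v / (p \<xi> * w v) \<le> ?M v" if "\<xi> \<in> {1..N}" for \<xi> v
    using that by (intro Max_ge) auto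
  have Min: "?M v \<in> (\<lambda>\<xi>. a \<xi> v / (p \<xi> * w v)) ` {1..N}" for v
    using ne by (intro Max_in) auto
  have sw: "(\<Sum>v\<in>V. if w v > 0 then g v else 0) = (\<Sum>v\<in>{v\<in>V. w v > 0}. g v)" for g :: "'v \<Rightarrow> real"
    using fin by (simp add: sum.inter_filter)
  show ?thesis
  proof
    show "proj_theta (setH V N p w a h) \<subseteq> {\<theta> \<in> V \<rightarrow>\<^sub>E {0..}. (\<Sum>v\<in>{v\<in>V. w v > 0}. max (?M v) 0 * \<theta> v) \<ge> h}"
    proof
      fix \<theta> assume "\<theta> \<in> proj_theta (setH V N p w a h)"
      then obtain y where th: "\<theta> \<in> V \<rightarrow>\<^sub>E {0..}" and y: "y \<in> ({1..N} \<times> V) \<rightarrow>\<^sub>E {0..}"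
        and s: "(\<Sum>\<xi>\<in>{1..N}. \<Sum>v\<in>V. a \<xi> v * y (\<xi>, v)) \<ge> h"
        and c: "\<forall>v\<in>V. \<theta> v \<ge> (\<Sum>\<xi>\<in>{1..N}. p \<xi> * w v * y (\<xi>, v))"
        unfolding proj_theta_def setH_def by auto
      have yge: "y (\<xi>, v) \<ge> 0" if "\<xi> \<in> {1..N}" "v \<in> V" for \<xi> v using y that by auto
      have per: "(\<Sum>\<xi>\<in>{1..N}. a \<xi> v * y (\<xi>, v)) \<le> (if w v > 0 then max (?M v) 0 * \<theta> v else 0)"
        if v: "v \<in> V" for v
      proof (cases "w v > 0")
        case True
        have "(\<Sum>\<xi>\<in>{1..N}. a \<xi> v * y (\<xi>, v)) \<le> (\<Sum>\<xi>\<in>{1..N}. max (?M v) 0 * (p \<xi> * w v * y (\<xi>, v)))"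
        proof (rule sum_mono)
          fix \<xi> assume x: "\<xi> \<in> {1..N}"
          have pw: "p \<xi> * w v > 0" using pp x True by auto
          have "a \<xi> v = (a \<xi> v / (p \<xi> * w v)) * (p \<xi> * w v)" using pw using nonzero_divide_eq_eq by (metis less_irrefl)
          also have "\<dots> \<le> max (?M v) 0 * (p \<xi> * w v)"
            using Mge[OF x, of v] pw by (intro mult_right_mono) auto
          finally have "a \<xi> v \<le> max (?M v) 0 * (p \<xi> * w v)" .
          then show "a \<xi> v * y (\<xi>, v) \<le> max (?M v) 0 * (p \<xi> * w v * y (\<xi>, v))"
            using yge[OF x v] by (metis mult.assoc mult_right_mono)
        qed
        also have "\<dots> = max (?M v) 0 * (\<Sum>\<xi>\<in>{1..N}. p \<xi> * w v * y (\<xi>, v))"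
          by (simp add: sum_distrib_left)
        also have "\<dots> \<le> max (?M v) 0 * \<theta> v" using c v by (intro mult_left_mono) auto
        finally show ?thesis using True by simp
      next
        case False
        then have w0: "w v = 0" using wp v by force
        have "(\<Sum>\<xi>\<in>{1..N}. a \<xi> v * y (\<xi>, v)) \<le> 0"
        proof (rule sum_nonpos)
          fix \<xi> assume x: "\<xi> \<in> {1..N}"
          have "a \<xi> v \<le> 0" using no v x w0 by force
          then show "a \<xi> v * y (\<xi>, v) \<le> 0" using yge[OF x v] by (simp add: mult_nonpos_nonneg)
        qed
        then show ?thesis using False by simp
      qed
      have "h \<le> (\<Sum>v\<in>V. \<Sum>\<xi>\<in>{1..N}. a \<xi> v * y (\<xi>, v))" using s sum.swap[of "\<lambda>\<xi> v. a \<xi> v * y (\<xi>, v)" V "{1..N}"] by linarith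
      also have "\<dots> \<le> (\<Sum>v\<in>V. if w v > 0 then max (?M v) 0 * \<theta> v else 0)"
        using per by (intro sum_mono) auto
      also have "\<dots> = (\<Sum>v\<in>{v\<in>V. w v > 0}. max (?M v) 0 * \<theta> v)" by (rule sw)
      finally show "\<theta> \<in> {\<theta> \<in> V \<rightarrow>\<^sub>E {0..}. (\<Sum>v\<in>{v\<in>V. w v > 0}. max (?M v) 0 * \<theta> v) \<ge> h}"
        using th by simp
    qed
  next
    show "{\<theta> \<in> V \<rightarrow>\<^sub>E {0..}. (\<Sum>v\<in>{v\<in>V. w v > 0}. max (?M v) 0 * \<theta> v) \<ge> h} \<subseteq> proj_theta (setH V N p w a h)"
    proof
      fix \<theta> assume "\<theta> \<in> {\<theta> \<in> V \<rightarrow>\<^sub>E {0..}. (\<Sum>v\<in>{v\<in>V. w v > 0}. max (?M v) 0 * \<theta> v) \<ge> h}"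
      then have th: "\<theta> \<in> V \<rightarrow>\<^sub>E {0..}" and hs: "(\<Sum>v\<in>{v\<in>V. w v > 0}. max (?M v) 0 * \<theta> v) \<ge> h" by auto
      define s where "s v = (SOME \<xi>. \<xi> \<in> {1..N} \<and> a \<xi> v / (p \<xi> * w v) = ?M v)" for v
      have s: "s v \<in> {1..N} \<and> a (s v) v / (p (s v) * w v) = ?M v" for v
      proof -
        obtain \<xi> where x: "\<xi> \<in> {1..N}" "?M v = a \<xi> v / (p \<xi> * w v)"
          using Min[of v] by (rule imageE)
        then have ex: "\<exists>\<xi>. \<xi> \<in> {1..N} \<and> a \<xi> v / (p \<xi> * w v) = ?M v" by metis
        show ?thesis unfolding s_def by (rule someI_ex[OF ex])
      qed
      define g where "g v = (if w v > 0 \<and> ?M v > 0 then \<theta> v / (p (s v) * w v) else 0)" for v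
      define y where "y = restrict (\<lambda>(\<xi>,v). if \<xi> = s v then g v else 0) ({1..N} \<times> V)"
      have g0: "g v \<ge> 0" if "v \<in> V" for v
        using th that s[of v] pp unfolding g_def by (auto intro!: divide_nonneg_pos)
      have y: "y \<in> ({1..N} \<times> V) \<rightarrow>\<^sub>E {0..}" using g0 by (auto simp: y_def)
      have per: "(\<Sum>\<xi>\<in>{1..N}. a \<xi> v * y (\<xi>, v)) = (if w v > 0 then max (?M v) 0 * \<theta> v else 0)"
        if v: "v \<in> V" for v
      proof -
        have "(\<Sum>\<xi>\<in>{1..N}. a \<xi> v * y (\<xi>, v)) = (\<Sum>\<xi>\<in>{1..N}. if s v = \<xi> then a (s v) v * g v else 0)"
          using v by (intro sum.cong) (auto simp: y_def)
        also have "\<dots> = a (s v) v * g v" using s[of v] by (simp add: sum.delta)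
        also have "\<dots> = (if w v > 0 then max (?M v) 0 * \<theta> v else 0)"
        proof (cases "w v > 0 \<and> ?M v > 0")
          case True
          have pw: "p (s v) * w v > 0" using pp s[of v] True by auto
          have "a (s v) v * g v = (a (s v) v / (p (s v) * w v)) * \<theta> v"
            using True pw by (simp add: g_def)
          then show ?thesis using s[of v] True by simp
        next
          case False
          then show ?thesis by (auto simp: g_def)
        qed
        finally show ?thesis .
      qed
      have "(\<Sum>\<xi>\<in>{1..N}. \<Sum>v\<in>V. a \<xi> v * y (\<xi>, v)) = (\<Sum>v\<in>V. \<Sum>\<xi>\<in>{1..N}. a \<xi> v * y (\<xi>, v))"
        by (rule sum.swap)
      also have "\<dots> = (\<Sum>v\<in>V. if w v > 0 then max (?M v) 0 * \<theta> v else 0)"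
        using per by (intro sum.cong) auto
      also have "\<dots> = (\<Sum>v\<in>{v\<in>V. w v > 0}. max (?M v) 0 * \<theta> v)" by (rule sw)
      finally have sh: "(\<Sum>\<xi>\<in>{1..N}. \<Sum>v\<in>V. a \<xi> v * y (\<xi>, v)) \<ge> h" using hs by simp
      have c: "\<forall>v\<in>V. \<theta> v \<ge> (\<Sum>\<xi>\<in>{1..N}. p \<xi> * w v * y (\<xi>, v))"
      proof
        fix v assume v: "v \<in> V"
        have "(\<Sum>\<xi>\<in>{1..N}. p \<xi> * w v * y (\<xi>, v)) = (\<Sum>\<xi>\<in>{1..N}. if s v = \<xi> then p (s v) * w v * g v else 0)"
          using v by (intro sum.cong) (auto simp: y_def)
        also have "\<dots> = p (s v) * w v * g v" using s[of v] by (simp add: sum.delta)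
        also have "\<dots> \<le> \<theta> v"
        proof (cases "w v > 0 \<and> ?M v > 0")
          case True
          have pw: "p (s v) * w v > 0" using pp s[of v] True by auto
          then show ?thesis using True th v by (auto simp: g_def)
        next
          case False
          then show ?thesis using th v by (auto simp: g_def)
        qed
        finally show "\<theta> v \<ge> (\<Sum>\<xi>\<in>{1..N}. p \<xi> * w v * y (\<xi>, v))" .
      qed
      have "(\<theta>, y) \<in> setH V N p w a h" unfolding setH_def using th y sh c by auto
      then show "\<theta> \<in> proj_theta (setH V N p w a h)" unfolding proj_theta_def by force
    qed
  qed
qed

theorem lemma5:
  fixes V :: "'v set" and N :: nat and p :: "nat \<Rightarrow> real" and w :: "'v \<Rightarrow> real"
    and a :: "nat \<Rightarrow> 'v \<Rightarrow> real" and h :: real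
  assumes "finite V" and "N > 0"
    and "\<forall>\<xi>\<in>{1..N}. 0 < p \<xi> \<and> p \<xi> \<le> 1"
    and "(\<Sum>\<xi>\<in>{1..N}. p \<xi>) = 1"
    and "\<forall>v\<in>V. w v \<in> \<rat> \<and> w v \<ge> 0"
  shows "((\<exists>v\<in>V. \<exists>\<xi>\<in>{1..N}. w v = 0 \<and> a \<xi> v > 0) \<longrightarrow>
            proj_theta (setH V N p w a h) = V \<rightarrow>\<^sub>E {0..})
       \<and> (\<not> (\<exists>v\<in>V. \<exists>\<xi>\<in>{1..N}. w v = 0 \<and> a \<xi> v > 0) \<longrightarrow>
            proj_theta (setH V N p w a h) =
              {\<theta> \<in> V \<rightarrow>\<^sub>E {0..}.
                 (\<Sum>v\<in>{v\<in>V. w v > 0}.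
                    max (Max ((\<lambda>\<xi>. a \<xi> v / (p \<xi> * w v)) ` {1..N})) 0 * \<theta> v) \<ge> h})"
proof (intro conjI impI)
  assume "\<exists>v\<in>V. \<exists>\<xi>\<in>{1..N}. w v = 0 \<and> a \<xi> v > 0"
  then obtain v x where "v \<in> V" "x \<in> {1..N}" "w v = 0" "a x v > 0" by blast
  then show "proj_theta (setH V N p w a h) = V \<rightarrow>\<^sub>E {0..}"
    using part1[OF assms(1)] by blast
next
  assume "\<not> (\<exists>v\<in>V. \<exists>\<xi>\<in>{1..N}. w v = 0 \<and> a \<xi> v > 0)"
  then show "proj_theta (setH V N p w a h) =
              {\<theta> \<in> V \<rightarrow>\<^sub>E {0..}.
                 (\<Sum>v\<in>{v\<in>V. w v > 0}.
                    max (Max ((\<lambda>\<xi>. a \<xi> v / (p \<xi> * w v)) ` {1..N})) 0 * \<theta> v) \<ge> h}"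
    using part2[OF assms(1,2)] assms(3,5) by blast
qed

end
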